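(* Let $n\ge2$ and $H_{n-1}=\{x\in\mathbb{R}^{n-1}:|x_1|+\dots+|x_{n-1}|+|x_1+\dots+x_{n-1}|\le1\}$. For generic $y\in\mathbb{R}^{n-1}$ (all $y_j$ nonzero and pairwise distinct), $\widehat{\chi_{H_{n-1}}}(y)$ equals \[ \frac{(-1)^{(n-1)/2}}{2^{n-2}\pi^{n-1}}\Bigg[-\sum_{1\le j<k\le n-1}\frac{(y_j-y_k)^{n-3}\cos(\pi(y_j-y_k))}{y_jy_k\prod_{i\ne j,k}(y_j-y_i)(y_k-y_i)}+\sum_{j=1}^{n-1}\frac{y_j^{n-3}\cos(\pi y_j)}{\prod_{i\ne j}(y_j-y_i)y_i}\Bigg] \] if $n$ is odd, and \[ \frac{(-1)^{n/2-1}}{2^{n-2}\pi^{n-1}}\Bigg[\sum_{1\le j<k\le n-1}\frac{(y_j-y_k)^{n-3}\sin(\pi(y_j-y_k))}{y_jy_k\prod_{i\ne j,k}(y_j-y_i)(y_k-y_i)}+\sum_{j=1}^{n-1}\frac{y_j^{n-3}\sin(\pi y_j)}{\prod_{i\ne j}(y_j-y_i)y_i}\Bigg] \] if $n$ is even. Here products over $i$ range over $i\in\{1,\dots,n-1\}$ with the indicated exclusions, and $\prod_{i\ne j}(y_j-y_i)y_i$ denotes $\prod_{i\ne j}\big((y_j-y_i)y_i\big)$.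
   Context: $\chi_S$ denotes the indicator function of a set $S$ and $\widehat f(y)=\int_{\mathbb{R}^{n-1}} f(x)e^{-2\pi i\langle x,y\rangle}dx$. *)

theory Defs
  imports "HOL-Analysis.Analysis"
begin

text \<open>Points of R^d are functions nat => real restricted to coordinates 1..d;
  Lebesgue measure on R^d is the product measure of lborel over the index set {1..d}.\<close>

definition H_set :: "nat \<Rightarrow> (nat \<Rightarrow> real) set" where
  "H_set d = {x. (\<Sum>i=1..d. \<bar>x i\<bar>) + \<bar>\<Sum>i=1..d. x i\<bar> \<le> 1}"

definition fourier_hat :: "nat \<Rightarrow> ((nat \<Rightarrow> real) \<Rightarrow> real) \<Rightarrow> (nat \<Rightarrow> real) \<Rightarrow> complex" where
  "fourier_hat d f y =
     (LINT x | PiM {1..d} (\<lambda>_. lborel).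
        complex_of_real (f x) * exp (- (2 * of_real pi * \<i> * complex_of_real (\<Sum>i=1..d. x i * y i))))"

end

theory Submission
  imports Defs
begin


definition P :: "nat set \<Rightarrow> (nat \<Rightarrow> complex) \<Rightarrow> nat \<Rightarrow> complex" where
  "P A W j = (\<Prod>i\<in>A-{j}. (W j - W i))"

definition dd :: "nat set \<Rightarrow> (nat \<Rightarrow> complex) \<Rightarrow> (complex \<Rightarrow> complex) \<Rightarrow> complex" where
  "dd A W f = (\<Sum>j\<in>A. f (W j) / P A W j)"

lemma dd_add: "dd A W (\<lambda>z. f z + g z) = dd A W f + dd A W g"
  unfolding dd_def by (simp add: add_divide_distrib sum.distrib)

lemma dd_cmult: "dd A W (\<lambda>z. c * f z) = c * dd A W f"
  unfolding dd_def by (simp add: sum_distrib_left mult.assoc)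

lemma P_nonzero: "finite A \<Longrightarrow> inj_on W A \<Longrightarrow> j \<in> A \<Longrightarrow> P A W j \<noteq> 0"
  unfolding P_def by (auto simp: inj_on_def)

lemma P_remove:
  assumes "finite A" "inj_on W A" "a \<in> A" "j \<in> A" "j \<noteq> a"
  shows "P A W j = (W j - W a) * P (A - {a}) W j"
proof -
  have "A - {j} = insert a (A - {a} - {j})" using assms by auto
  then show ?thesis unfolding P_def using assms by (simp add: prod.insert)
qed

lemma dd_mult:
  assumes A: "finite A" and inj: "inj_on W A" and a: "a \<in> A"
  shows "dd A W (\<lambda>z. (z - W a) * g z) = dd (A - {a}) W g"
proof -
  have "dd A W (\<lambda>z. (z - W a) * g z) = (\<Sum>j\<in>A - {a}. (W j - W a) * g (W j) / P A W j)"
    unfolding dd_def using A a by (simp add: sum.remove)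
  also have "\<dots> = (\<Sum>j\<in>A - {a}. g (W j) / P (A - {a}) W j)"
  proof (intro sum.cong refl)
    fix j assume j: "j \<in> A - {a}"
    then have "W j - W a \<noteq> 0" using inj a by (auto simp: inj_on_def)
    then show "(W j - W a) * g (W j) / P A W j = g (W j) / P (A - {a}) W j"
      using P_remove[OF A inj a, of j] j by simp
  qed
  finally show ?thesis unfolding dd_def .
qed

lemma dd_one:
  assumes "finite A" "inj_on W A" "card A \<ge> 2"
  shows "dd A W (\<lambda>_. 1) = 0"
  using assms
proof (induction "card A" arbitrary: A rule: less_induct)
  case less
  then obtain a b where ab: "a \<in> A" "b \<in> A" "a \<noteq> b"
    by (metis One_nat_def card.empty card_le_Suc0_iff_eq le_SucE not_less_eq_eq numeral_2_eq_2 zero_less_Suc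
        card_0_eq less_one not_one_le_zero)
  have e1: "dd A W (\<lambda>z. (z - W b) * 1) = dd (A - {b}) W (\<lambda>_. 1)"
    by (rule dd_mult) (use less ab in auto)
  have e2: "dd A W (\<lambda>z. (z - W a) * 1) = dd (A - {a}) W (\<lambda>_. 1)"
    by (rule dd_mult) (use less ab in auto)
  have eq: "dd (A - {b}) W (\<lambda>_. 1) = dd (A - {a}) W (\<lambda>_. 1)"
  proof (cases "card A = 2")
    case True
    then have "A - {b} = {a}" "A - {a} = {b}" using ab less(2)
      by (auto simp: card_2_iff)
    then show ?thesis by (simp add: dd_def P_def)
  next
    case False
    have cA: "card (A - {a}) = card A - 1" "card (A - {b}) = card A - 1" using ab less(2) by auto
    have "dd (A - {b}) W (\<lambda>_. 1) = 0" using less(1)[of "A - {b}"] cA False less(2-4) ab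
      by (auto simp: inj_on_diff)
    moreover have "dd (A - {a}) W (\<lambda>_. 1) = 0" using less(1)[of "A - {a}"] cA False less(2-4) ab
      by (auto simp: inj_on_diff)
    ultimately show ?thesis by simp
  qed
  have "dd A W (\<lambda>z. (z - W b) * 1) - dd A W (\<lambda>z. (z - W a) * 1) = dd A W (\<lambda>z. (W a - W b) * 1)"
    unfolding dd_def by (simp add: sum_subtractf[symmetric] diff_divide_distrib[symmetric])
  also have "\<dots> = (W a - W b) * dd A W (\<lambda>_. 1)" by (rule dd_cmult)
  finally have "(W a - W b) * dd A W (\<lambda>_. 1) = 0" using e1 e2 eq by simp
  moreover have "W a \<noteq> W b" using ab less(3) by (auto simp: inj_on_def)
  ultimately show ?case by simp
qed

lemma dd_pow:
  assumes "finite A" "inj_on W A" "d + 2 \<le> card A"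
  shows "dd A W (\<lambda>z. (z - c) ^ d) = 0"
  using assms
proof (induction d arbitrary: A)
  case 0
  then show ?case using dd_one by simp
next
  case (Suc d)
  then obtain a where a: "a \<in> A" by fastforce
  have "dd A W (\<lambda>z. (z - c) ^ Suc d) = dd A W (\<lambda>z. (z - W a) * (z - c) ^ d + (W a - c) * (z - c) ^ d)"
    by (simp add: algebra_simps)
  also have "\<dots> = dd (A - {a}) W (\<lambda>z. (z - c) ^ d) + (W a - c) * dd A W (\<lambda>z. (z - c) ^ d)"
    unfolding dd_add dd_cmult using dd_mult[OF Suc(2,3) a] by simp
  also have "dd (A - {a}) W (\<lambda>z. (z - c) ^ d) = 0"
    using Suc a by (intro Suc.IH) (auto simp: inj_on_diff)
  also have "dd A W (\<lambda>z. (z - c) ^ d) = 0"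
    using Suc by (intro Suc.IH) auto
  finally show ?case by simp
qed

definition CF :: "nat \<Rightarrow> (nat \<Rightarrow> complex) \<Rightarrow> real \<Rightarrow> real \<Rightarrow> complex" where
  "CF m W a b = (\<Sum>j\<in>{0..m}. \<Sum>k\<in>{0..m}. (W j - W k) ^ m / (P {0..m} W j * P {0..m} W k) *
      exp (W k * of_real a - W j * of_real b))"

lemma CF_step:
  fixes W :: "nat \<Rightarrow> complex" and a b :: real
  assumes inj: "inj_on W {0..Suc m}"
  shows "CF (Suc m) W a b =
    (\<Sum>j\<in>{0..m}. \<Sum>k\<in>{0..m}. (W j - W k) ^ m / (P {0..m} W j * P {0..m} W k) *
       ((exp (W k * of_real a - W (Suc m) * of_real b) - exp (W k * of_real a - W j * of_real b)) / (W j - W (Suc m))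
       + (exp (W k * of_real a - W j * of_real b) - exp (W (Suc m) * of_real a - W j * of_real b)) / (W k - W (Suc m))))"
proof -
  define A where "A = {0..m}"
  define s where "s = Suc m"
  define A' where "A' = {0..Suc m}"
  define w where "w = W s"
  define E where "E = (\<lambda>k j. exp (W k * of_real a - W j * of_real b))"
  define C where "C = (\<lambda>j k. (W j - W k) ^ m / (P A W j * P A W k))"
  define Q where "Q = (\<Prod>i\<in>A. (w - W i))"
  have A'eq: "A' = insert s A" and sA: "s \<notin> A" and finA: "finite A" and finA': "finite A'"
    unfolding A'_def A_def s_def by auto
  have sumA': "\<And>g. sum g A' = g s + sum g A" using A'eq finA sA by simp
  have injA: "inj_on W A" using inj unfolding A_def by (rule inj_on_subset) auto
  have inj': "inj_on W A'" using inj unfolding A'_def .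
  have PA': "P A' W j = P A W j * (W j - w)" if j: "j \<in> A" for j
  proof -
    have "P A' W j = (W j - W s) * P (A' - {s}) W j"
      using j sA by (intro P_remove[OF finA' inj']) (auto simp: A'eq)
    also have "A' - {s} = A" using A'eq sA by auto
    finally show ?thesis unfolding w_def by simp
  qed
  have PQ: "P A' W s = Q" unfolding P_def Q_def w_def using A'eq sA by (simp add: Diff_insert0)
  have Pnz: "P A W j \<noteq> 0" if "j \<in> A" for j using P_nonzero[OF finA injA that] .
  have wnz: "W j - w \<noteq> 0" if "j \<in> A" for j
    using inj' that unfolding w_def A'eq by (auto simp: inj_on_def sA)
  have Qnz: "Q \<noteq> 0" unfolding Q_def using wnz finA by (auto simp: algebra_simps)
  have ddA': "(\<Sum>j\<in>A. (W j - c) ^ m / (P A W j * (W j - w))) + (w - c) ^ m / Q = 0" for c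
  proof -
    have "dd A' W (\<lambda>z. (z - c) ^ m) = 0"
      using finA' inj' by (intro dd_pow) (auto simp: A'_def)
    moreover have "dd A' W (\<lambda>z. (z - c) ^ m) = (W s - c) ^ m / P A' W s + (\<Sum>j\<in>A. (W j - c) ^ m / P A' W j)"
      unfolding dd_def by (rule sumA')
    moreover have "(\<Sum>j\<in>A. (W j - c) ^ m / P A' W j) = (\<Sum>j\<in>A. (W j - c) ^ m / (P A W j * (W j - w)))"
      by (intro sum.cong refl) (simp add: PA')
    ultimately show ?thesis unfolding PQ w_def by (simp add: add.commute)

  qed
  have S2: "(\<Sum>j\<in>A. C j k / (W j - w)) = - ((w - W k) ^ m) / (Q * P A W k)" if k: "k \<in> A" for k
  proof -
    have "(\<Sum>j\<in>A. C j k / (W j - w)) = (\<Sum>j\<in>A. (W j - W k) ^ m / (P A W j * (W j - w))) / P A W k"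
      unfolding C_def sum_divide_distrib by (intro sum.cong refl) (simp add: field_simps)
    also have "(\<Sum>j\<in>A. (W j - W k) ^ m / (P A W j * (W j - w))) = - ((w - W k) ^ m) / Q"
      using ddA'[of "W k"] by (simp add: eq_neg_iff_add_eq_0)
    finally show ?thesis by simp
  qed
  have S3: "(\<Sum>k\<in>A. C j k / (W k - w)) = - ((W j - w) ^ m) / (P A W j * Q)" if j: "j \<in> A" for j
  proof -
    have "(\<Sum>k\<in>A. C j k / (W k - w)) = (-1) ^ m * (\<Sum>k\<in>A. (W k - W j) ^ m / (P A W k * (W k - w))) / P A W j"
      unfolding C_def sum_divide_distrib sum_distrib_left
    proof (intro sum.cong refl)
      fix k
      have "(W j - W k) ^ m = (-1) ^ m * (W k - W j) ^ m"
        by (metis minus_diff_eq power_minus)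
      then show "(W j - W k) ^ m / (P A W j * P A W k) / (W k - w) =
          (-1) ^ m * ((W k - W j) ^ m / (P A W k * (W k - w))) / P A W j"
        by (simp add: field_simps)
    qed
    also have "(\<Sum>k\<in>A. (W k - W j) ^ m / (P A W k * (W k - w))) = - ((w - W j) ^ m) / Q"
      using ddA'[of "W j"] by (simp add: eq_neg_iff_add_eq_0)
    also have "(-1) ^ m * (- ((w - W j) ^ m) / Q) / P A W j = - ((-1) ^ m * (w - W j) ^ m) / (P A W j * Q)"
      by (simp add: field_simps)
    also have "(-1) ^ m * (w - W j) ^ m = (W j - w) ^ m"
      by (metis minus_diff_eq power_minus)
    finally show ?thesis .
  qed
  have RHS: "(\<Sum>j\<in>A. \<Sum>k\<in>A. C j k * ((E k s - E k j) / (W j - w) + (E k j - E s j) / (W k - w))) =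
     (\<Sum>j\<in>A. \<Sum>k\<in>A. C j k * E k j * (1 / (W k - w) - 1 / (W j - w)))
     + (\<Sum>k\<in>A. E k s * (\<Sum>j\<in>A. C j k / (W j - w)))
     - (\<Sum>j\<in>A. E s j * (\<Sum>k\<in>A. C j k / (W k - w)))"
  proof -
    have "(\<Sum>j\<in>A. \<Sum>k\<in>A. C j k * ((E k s - E k j) / (W j - w) + (E k j - E s j) / (W k - w))) =
      (\<Sum>j\<in>A. \<Sum>k\<in>A. C j k * E k j * (1 / (W k - w) - 1 / (W j - w)) + E k s * (C j k / (W j - w)) - E s j * (C j k / (W k - w)))"
      by (intro sum.cong refl) (simp add: algebra_simps diff_divide_distrib add_divide_distrib)
    also have "\<dots> = (\<Sum>j\<in>A. \<Sum>k\<in>A. C j k * E k j * (1 / (W k - w) - 1 / (W j - w)))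
      + (\<Sum>j\<in>A. \<Sum>k\<in>A. E k s * (C j k / (W j - w))) - (\<Sum>j\<in>A. \<Sum>k\<in>A. E s j * (C j k / (W k - w)))"
      by (simp add: sum.distrib sum_subtractf)
    also have "(\<Sum>j\<in>A. \<Sum>k\<in>A. E k s * (C j k / (W j - w))) = (\<Sum>k\<in>A. E k s * (\<Sum>j\<in>A. C j k / (W j - w)))"
      by (subst sum.swap) (simp add: sum_distrib_left)
    also have "(\<Sum>j\<in>A. \<Sum>k\<in>A. E s j * (C j k / (W k - w))) = (\<Sum>j\<in>A. E s j * (\<Sum>k\<in>A. C j k / (W k - w)))"
      by (simp add: sum_distrib_left)
    finally show ?thesis .
  qed
  define T where "T = (\<lambda>j k. (W j - W k) ^ Suc m / (P A' W j * P A' W k) * E k j)"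
  have LHS: "CF (Suc m) W a b = (\<Sum>j\<in>A. \<Sum>k\<in>A. T j k) + (\<Sum>j\<in>A. T j s) + (\<Sum>k\<in>A. T s k) + T s s"
    unfolding CF_def T_def E_def A'_def[symmetric] A'eq using finA sA
    by (simp add: sum.distrib algebra_simps)
  have T1: "T j k = C j k * E k j * (1 / (W k - w) - 1 / (W j - w))" if "j \<in> A" "k \<in> A" for j k
    unfolding T_def C_def using that Pnz wnz
    by (simp add: PA' field_simps)
  have T2: "T j s = - E s j * (\<Sum>k\<in>A. C j k / (W k - w))" if "j \<in> A" for j
    unfolding T_def S3[OF that] PQ using that Pnz wnz Qnz
    by (simp add: PA' field_simps w_def)
  have T3: "T s k = E k s * (\<Sum>j\<in>A. C j k / (W j - w))" if "k \<in> A" for k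
    unfolding T_def S2[OF that] PQ using that Pnz wnz Qnz
    by (simp add: PA' field_simps w_def)
  have T4: "T s s = 0" unfolding T_def by simp
  have "CF (Suc m) W a b = (\<Sum>j\<in>A. \<Sum>k\<in>A. C j k * ((E k s - E k j) / (W j - w) + (E k j - E s j) / (W k - w)))"
    unfolding LHS RHS T4
    by (simp add: T1 T2 T3 sum_negf cong: sum.cong)
  then show ?thesis unfolding A_def C_def E_def w_def s_def .
qed

lemma i_power_odd: "odd m \<Longrightarrow> \<i> ^ m = \<i> * (-1) ^ (m div 2)"
proof -
  assume "odd m"
  then obtain q where q: "m = Suc (2 * q)" by (metis oddE Suc_eq_plus1)
  have "\<i> ^ m = \<i> * \<i> ^ (q * 2)" unfolding q by (simp add: mult.commute)
  also have "\<dots> = \<i> * (-1) ^ q" by (simp only: i_even_power)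
  finally show ?thesis using q by simp
qed

lemma neg1_pow_sq: "((-1::'a::comm_ring_1) ^ q) * (-1) ^ q = 1"
proof -
  have "((-1::'a) ^ q) * (-1) ^ q = ((-1) * (-1)) ^ q" by (rule power_mult_distrib[symmetric])
  then show ?thesis by simp
qed

lemma swap_sym_sum:
  fixes D :: "nat \<Rightarrow> nat \<Rightarrow> real" and g :: "real \<Rightarrow> real" and \<theta> :: "nat \<Rightarrow> nat \<Rightarrow> real"
  assumes "\<And>j k. D k j * g (\<theta> k j) = s * (D j k * g (\<theta> j k))"
  shows "(\<Sum>j\<in>A. \<Sum>k\<in>A. D j k * g (\<theta> j k)) = s * (\<Sum>j\<in>A. \<Sum>k\<in>A. D j k * g (\<theta> j k))"
proof -
  have "(\<Sum>j\<in>A. \<Sum>k\<in>A. D j k * g (\<theta> j k)) = (\<Sum>k\<in>A. \<Sum>j\<in>A. D j k * g (\<theta> j k))"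
    by (rule sum.swap)
  also have "\<dots> = (\<Sum>k\<in>A. \<Sum>j\<in>A. s * (D k j * g (\<theta> k j)))"
    by (intro sum.cong refl) (rule assms)
  also have "\<dots> = s * (\<Sum>k\<in>A. \<Sum>j\<in>A. D k j * g (\<theta> k j))"
    by (simp only: sum_distrib_left)
  finally show ?thesis .
qed

lemma complex_part:
  fixes y :: "nat \<Rightarrow> real" and m :: nat and trig :: "real \<Rightarrow> real"
  assumes tr: "(even m \<and> trig = cos) \<or> (odd m \<and> trig = sin)"
  defines "Y \<equiv> \<lambda>i. if i = 0 then 0 else y i"
  defines "p \<equiv> \<lambda>j. \<Prod>i\<in>{0..m}-{j}. (Y j - Y i)"
  defines "W \<equiv> \<lambda>i. 2 * of_real pi * \<i> * complex_of_real (Y i)"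
  shows "CF m W (1/2) (1/2) = of_real ((-1) ^ (m div 2) / (2 * pi) ^ m *
      (\<Sum>j=0..m. \<Sum>k=0..m. (Y j - Y k) ^ m / (p j * p k) * trig (pi * (Y k - Y j))))"
proof -
  define c where "c = 2 * of_real pi * \<i>"
  have cnz: "c \<noteq> 0" unfolding c_def by simp
  define D where "D = (\<lambda>j k. (Y j - Y k) ^ m / (p j * p k))"
  define \<theta> where "\<theta> = (\<lambda>j k. pi * (Y k - Y j))"
  have Wd: "W j - W k = c * of_real (Y j - Y k)" for j k unfolding W_def c_def by (simp add: algebra_simps)
  have Wp: "(W j - W k) ^ m = c ^ m * of_real ((Y j - Y k) ^ m)" for j k
    unfolding Wd by (simp add: power_mult_distrib)
  have PW: "P {0..m} W j = c ^ m * of_real (p j)" if j: "j \<in> {0..m}" for j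
  proof -
    have "P {0..m} W j = (\<Prod>i\<in>{0..m}-{j}. c * of_real (Y j - Y i))" unfolding P_def Wd ..
    also have "\<dots> = c ^ card ({0..m}-{j}) * of_real (p j)" unfolding p_def by (simp add: prod.distrib)
    also have "card ({0..m}-{j}) = m" using j by simp
    finally show ?thesis .
  qed
  have trm: "(W j - W k) ^ m / (P {0..m} W j * P {0..m} W k) * exp (W k * of_real (1/2) - W j * of_real (1/2))
      = of_real (D j k) / c ^ m * (of_real (cos (\<theta> j k)) + \<i> * of_real (sin (\<theta> j k)))"
    if "j \<in> {0..m}" "k \<in> {0..m}" for j k
  proof -
    have e: "W k * of_real (1/2) - W j * of_real (1/2) = \<i> * of_real (\<theta> j k)"
      unfolding W_def \<theta>_def by (simp add: algebra_simps)
    have "exp (\<i> * of_real (\<theta> j k)) = of_real (cos (\<theta> j k)) + \<i> * of_real (sin (\<theta> j k))"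
      by (simp add: exp_Euler cos_of_real sin_of_real)
    moreover have "(W j - W k) ^ m / (P {0..m} W j * P {0..m} W k) = of_real (D j k) / c ^ m"
      unfolding Wp PW[OF that(1)] PW[OF that(2)] D_def using cnz
      by (simp add: power_mult_distrib field_simps)
    ultimately show ?thesis unfolding e by simp
  qed
  define U where "U = (\<Sum>j=0..m. \<Sum>k=0..m. D j k * cos (\<theta> j k))"
  define V where "V = (\<Sum>j=0..m. \<Sum>k=0..m. D j k * sin (\<theta> j k))"
  have "CF m W (1/2) (1/2) = (\<Sum>j=0..m. \<Sum>k=0..m. of_real (D j k) / c ^ m * (of_real (cos (\<theta> j k)) + \<i> * of_real (sin (\<theta> j k))))"
    unfolding CF_def by (intro sum.cong refl trm) auto
  also have "\<dots> = (of_real U + \<i> * of_real V) / c ^ m"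
    unfolding U_def V_def
    by (simp add: add_divide_distrib sum_divide_distrib sum_distrib_left sum.distrib algebra_simps)
  finally have CFe: "CF m W (1/2) (1/2) = (of_real U + \<i> * of_real V) / c ^ m" .
  have Dsym: "D k j = (-1) ^ m * D j k" for j k
  proof -
    have h: "(Y k - Y j) ^ m = (-1) ^ m * (Y j - Y k) ^ m" by (metis minus_diff_eq power_minus)
    show ?thesis unfolding D_def h by (simp add: mult.commute)
  qed
  have thsym: "\<theta> k j = - \<theta> j k" for j k unfolding \<theta>_def by (simp add: algebra_simps)
  have Usym: "U = (-1) ^ m * U" unfolding U_def
  proof (rule swap_sym_sum)
    fix j k show "D k j * cos (\<theta> k j) = (-1) ^ m * (D j k * cos (\<theta> j k))"
      unfolding Dsym[of j k] thsym[of j k] by simp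
  qed
  have Vsym: "V = - ((-1) ^ m) * V" unfolding V_def
  proof (rule swap_sym_sum)
    fix j k show "D k j * sin (\<theta> k j) = - ((-1) ^ m) * (D j k * sin (\<theta> j k))"
      unfolding Dsym[of j k] thsym[of j k] by simp
  qed
  have cpow: "c ^ m = of_real ((2 * pi) ^ m) * \<i> ^ m" unfolding c_def by (simp add: power_mult_distrib)
  show ?thesis
  proof (cases "even m")
    case True
    then have V0: "V = 0" using Vsym by simp
    have tc: "trig = cos" using tr True by auto
    have "CF m W (1/2) (1/2) = of_real U / (of_real ((2 * pi) ^ m) * (-1) ^ (m div 2))"
      unfolding CFe V0 cpow using True by (simp add: i_even_power')
    also have "\<dots> = of_real ((-1) ^ (m div 2) / (2 * pi) ^ m * U)"
      using neg1_pow_sq[of "m div 2", where 'a=complex] by (simp add: field_simps)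
    finally show ?thesis unfolding tc U_def D_def \<theta>_def .
  next
    case False
    then have U0: "U = 0" using Usym by simp
    have ts: "trig = sin" using tr False by auto
    have "CF m W (1/2) (1/2) = \<i> * of_real V / (of_real ((2 * pi) ^ m) * (\<i> * (-1) ^ (m div 2)))"
      unfolding CFe U0 cpow using False by (simp add: i_power_odd)
    also have "\<dots> = of_real ((-1) ^ (m div 2) / (2 * pi) ^ m * V)"
      using neg1_pow_sq[of "m div 2", where 'a=complex] by (simp add: field_simps)
    finally show ?thesis unfolding ts V_def D_def \<theta>_def .
  qed
qed



lemma sym_sum:
  fixes \<phi> :: "nat \<Rightarrow> nat \<Rightarrow> real"
  assumes sym: "\<And>j k. \<phi> j k = \<phi> k j" and diag: "\<And>j. \<phi> j j = 0"
  shows "(\<Sum>j=0..m. \<Sum>k=0..m. \<phi> j k) = 2 * (\<Sum>j=0..m. \<Sum>k=Suc j..m. \<phi> j k)"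
proof (induction m)
  case 0
  then show ?case by (simp add: diag)
next
  case (Suc m)
  have L: "(\<Sum>j=0..Suc m. \<Sum>k=0..Suc m. \<phi> j k) =
      (\<Sum>j=0..m. \<Sum>k=0..m. \<phi> j k) + (\<Sum>j=0..m. \<phi> j (Suc m)) + (\<Sum>k=0..m. \<phi> (Suc m) k)"
    by (simp add: sum.distrib diag)
  have R: "(\<Sum>j=0..Suc m. \<Sum>k=Suc j..Suc m. \<phi> j k) =
      (\<Sum>j=0..m. \<Sum>k=Suc j..m. \<phi> j k) + (\<Sum>j=0..m. \<phi> j (Suc m))"
  proof -
    have "(\<Sum>j=0..Suc m. \<Sum>k=Suc j..Suc m. \<phi> j k) = (\<Sum>j=0..m. \<Sum>k=Suc j..Suc m. \<phi> j k)"
      by simp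
    also have "\<dots> = (\<Sum>j=0..m. (\<Sum>k=Suc j..m. \<phi> j k) + \<phi> j (Suc m))"
      by (intro sum.cong refl) simp
    finally show ?thesis by (simp add: sum.distrib)
  qed
  have "(\<Sum>k=0..m. \<phi> (Suc m) k) = (\<Sum>j=0..m. \<phi> j (Suc m))" using sym by simp
  then show ?case unfolding L R Suc.IH by simp
qed

lemma prod_neg_real: "finite A \<Longrightarrow> (\<Prod>i\<in>A. - (f i :: real)) = (-1) ^ card A * (\<Prod>i\<in>A. f i)"
proof -
  assume "finite A"
  have "(\<Prod>i\<in>A. - f i) = (\<Prod>i\<in>A. (-1) * f i)" by simp
  also have "\<dots> = (\<Prod>i\<in>A. (-1::real)) * (\<Prod>i\<in>A. f i)" by (rule prod.distrib)
  also have "\<dots> = (-1) ^ card A * (\<Prod>i\<in>A. f i)" by simp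
  finally show ?thesis .
qed

lemma powi_m2: "(x::real) \<noteq> 0 \<Longrightarrow> x powi (int m - 2) = x ^ m / x\<^sup>2"
  by (simp add: power_int_diff)

lemma real_part:
  fixes y :: "nat \<Rightarrow> real" and m :: nat and trig :: "real \<Rightarrow> real" and \<sigma> :: real
  assumes m: "m \<ge> 1" and nz: "\<And>j. j \<in> {1..m} \<Longrightarrow> y j \<noteq> 0"
    and dist: "\<And>j k. j \<in> {1..m} \<Longrightarrow> k \<in> {1..m} \<Longrightarrow> j \<noteq> k \<Longrightarrow> y j \<noteq> y k"
    and tr: "(even m \<and> trig = cos \<and> \<sigma> = -1) \<or> (odd m \<and> trig = sin \<and> \<sigma> = 1)"
  defines "Y \<equiv> \<lambda>i. if i = 0 then 0 else y i"
  defines "p \<equiv> \<lambda>j. \<Prod>i\<in>{0..m}-{j}. (Y j - Y i)"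
  shows "(\<Sum>j=0..m. \<Sum>k=0..m. (Y j - Y k) ^ m / (p j * p k) * trig (pi * (Y k - Y j))) =
    2 * (\<sigma> * (\<Sum>j=1..m. \<Sum>k=Suc j..m. (y j - y k) powi (int m - 2) * trig (pi * (y j - y k)) /
              (y j * y k * (\<Prod>i\<in>{1..m}-{j,k}. (y j - y i) * (y k - y i))))
        + (\<Sum>j=1..m. y j powi (int m - 2) * trig (pi * y j) / (\<Prod>i\<in>{1..m}-{j}. (y j - y i) * y i)))"
proof -
  define \<phi> where "\<phi> = (\<lambda>j k. (Y j - Y k) ^ m / (p j * p k) * trig (pi * (Y k - Y j)))"
  have trneg: "trig (- x) = - \<sigma> * trig x" for x using tr by auto
  have sym: "\<phi> j k = \<phi> k j" for j k
  proof -
    have h1: "(Y k - Y j) ^ m = (-1) ^ m * (Y j - Y k) ^ m" by (metis minus_diff_eq power_minus)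
    have h2: "trig (pi * (Y j - Y k)) = - \<sigma> * trig (pi * (Y k - Y j))"
      using trneg[of "pi * (Y k - Y j)"] by (simp add: algebra_simps)
    have h3: "(-1) ^ m * - \<sigma> = (1::real)" using tr by auto
    have "\<phi> k j = ((-1) ^ m * (Y j - Y k) ^ m) / (p k * p j) * (- \<sigma> * trig (pi * (Y k - Y j)))"
      unfolding \<phi>_def h1 h2 ..
    also have "\<dots> = ((-1) ^ m * - \<sigma>) * ((Y j - Y k) ^ m / (p j * p k) * trig (pi * (Y k - Y j)))"
      by (simp only: divide_inverse mult_ac)
    also have "\<dots> = \<phi> j k" unfolding h3 \<phi>_def by simp
    finally show ?thesis ..
  qed
  have diag: "\<phi> j j = 0" for j unfolding \<phi>_def using m by simp
  have "(\<Sum>j=0..m. \<Sum>k=0..m. \<phi> j k) = 2 * (\<Sum>j=0..m. \<Sum>k=Suc j..m. \<phi> j k)"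
    by (rule sym_sum[OF sym diag])
  also have "(\<Sum>j=0..m. \<Sum>k=Suc j..m. \<phi> j k) = (\<Sum>k=1..m. \<phi> 0 k) + (\<Sum>j=1..m. \<Sum>k=Suc j..m. \<phi> j k)"
    by (simp add: sum.atLeast_Suc_atMost)
  also have "(\<Sum>k=1..m. \<phi> 0 k) = (\<Sum>j=1..m. y j powi (int m - 2) * trig (pi * y j) / (\<Prod>i\<in>{1..m}-{j}. (y j - y i) * y i))"
  proof (intro sum.cong refl)
    fix k assume k: "k \<in> {1..m}"
    define Q where "Q = (\<Prod>i\<in>{1..m}-{k}. (y k - y i))"
    define R where "R = (\<Prod>i\<in>{1..m}-{k}. y i)"
    have yk: "y k \<noteq> 0" using nz k by auto
    have Qnz: "Q \<noteq> 0" unfolding Q_def using dist k by auto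
    have Rnz: "R \<noteq> 0" unfolding R_def using nz by auto
    have e1: "{0..m} - {0} = {1..m}" by auto
    have p0: "p 0 = (-1) ^ m * (y k * R)"
    proof -
      have "p 0 = (\<Prod>i\<in>{1..m}. - y i)" unfolding p_def Y_def e1 by (intro prod.cong refl) auto
      also have "\<dots> = (-1) ^ m * (\<Prod>i\<in>{1..m}. y i)" by (simp add: prod_neg_real)
      also have "(\<Prod>i\<in>{1..m}. y i) = y k * R" unfolding R_def using k by (simp add: prod.remove)
      finally show ?thesis .
    qed
    have e2: "{0..m} - {k} = insert 0 ({1..m} - {k})" using k by auto
    have pk: "p k = y k * Q"
    proof -
      have "p k = (Y k - Y 0) * (\<Prod>i\<in>{1..m}-{k}. (Y k - Y i))" unfolding p_def e2 by simp
      also have "(\<Prod>i\<in>{1..m}-{k}. (Y k - Y i)) = Q" unfolding Q_def Y_def using k by (intro prod.cong refl) auto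
      finally show ?thesis using k by (simp add: Y_def)
    qed
    have QR: "(\<Prod>i\<in>{1..m}-{k}. (y k - y i) * y i) = Q * R" unfolding Q_def R_def by (simp add: prod.distrib)
    have "\<phi> 0 k = (-1) ^ m * y k ^ m / ((-1) ^ m * (y k * R) * (y k * Q)) * trig (pi * y k)"
    proof -
      have h: "(Y 0 - Y k) ^ m = (-1) ^ m * y k ^ m" using k by (simp add: Y_def power_minus[of "y k"])
      have h2: "Y k - Y 0 = y k" using k by (simp add: Y_def)
      show ?thesis unfolding \<phi>_def p0 pk h h2 ..
    qed
    also have "(-1) ^ m * (y k * R) * (y k * Q) = (-1) ^ m * ((y k)\<^sup>2 * (Q * R))"
      by (simp add: power2_eq_square mult_ac)
    also have "(-1) ^ m * y k ^ m / ((-1) ^ m * ((y k)\<^sup>2 * (Q * R))) = y k ^ m / ((y k)\<^sup>2 * (Q * R))"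
      by (rule mult_divide_mult_cancel_left) simp
    also have "y k ^ m / ((y k)\<^sup>2 * (Q * R)) * trig (pi * y k) = y k ^ m / (y k)\<^sup>2 * trig (pi * y k) / (Q * R)"
      by (simp add: divide_inverse mult_ac)
    finally show "\<phi> 0 k = y k powi (int m - 2) * trig (pi * y k) / (\<Prod>i\<in>{1..m}-{k}. (y k - y i) * y i)"
      unfolding QR powi_m2[OF yk] .
  qed
  also have "(\<Sum>j=1..m. \<Sum>k=Suc j..m. \<phi> j k) = \<sigma> * (\<Sum>j=1..m. \<Sum>k=Suc j..m. (y j - y k) powi (int m - 2) * trig (pi * (y j - y k)) /
              (y j * y k * (\<Prod>i\<in>{1..m}-{j,k}. (y j - y i) * (y k - y i))))"
    unfolding sum_distrib_left
  proof (intro sum.cong refl)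
    fix j k assume j: "j \<in> {1..m}" and k: "k \<in> {Suc j..m}"
    define S where "S = {1..m} - {j, k}"
    define Pj where "Pj = (\<Prod>i\<in>S. (y j - y i))"
    define Pk where "Pk = (\<Prod>i\<in>S. (y k - y i))"
    have jk: "j \<noteq> k" "k \<in> {1..m}" using j k by auto
    have yj: "y j \<noteq> 0" and yk: "y k \<noteq> 0" using nz j jk by auto
    have d: "y j - y k \<noteq> 0" using dist j jk by auto
    have Pjnz: "Pj \<noteq> 0" unfolding Pj_def S_def using dist j by auto
    have Pknz: "Pk \<noteq> 0" unfolding Pk_def S_def using dist jk by auto
    have ej: "{0..m} - {j} = insert 0 (insert k S)" and ek: "{0..m} - {k} = insert 0 (insert j S)"
      unfolding S_def using j jk by auto
    have fin: "finite S" "0 \<notin> S" "k \<notin> S" "j \<notin> S" "k \<noteq> 0" "j \<noteq> 0" "0 \<notin> insert k S" "0 \<notin> insert j S"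
      unfolding S_def using j jk by auto
    have YS: "\<And>i. i \<in> S \<Longrightarrow> Y i = y i" unfolding S_def Y_def by auto
    have pj: "p j = y j * (y j - y k) * Pj"
    proof -
      have "p j = (Y j - Y 0) * ((Y j - Y k) * (\<Prod>i\<in>S. (Y j - Y i)))" unfolding p_def ej using fin by simp
      also have "(\<Prod>i\<in>S. (Y j - Y i)) = Pj" unfolding Pj_def using YS j by (intro prod.cong refl) (auto simp: Y_def)
      finally show ?thesis using j jk by (simp add: Y_def)
    qed
    have pk: "p k = y k * (y k - y j) * Pk"
    proof -
      have "p k = (Y k - Y 0) * ((Y k - Y j) * (\<Prod>i\<in>S. (Y k - Y i)))" unfolding p_def ek using fin by simp
      also have "(\<Prod>i\<in>S. (Y k - Y i)) = Pk" unfolding Pk_def using YS jk by (intro prod.cong refl) (auto simp: Y_def)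
      finally show ?thesis using j jk by (simp add: Y_def)
    qed
    have PP: "(\<Prod>i\<in>{1..m}-{j,k}. (y j - y i) * (y k - y i)) = Pj * Pk"
      unfolding Pj_def Pk_def S_def by (simp add: prod.distrib)
    have tk: "trig (pi * (y k - y j)) = - \<sigma> * trig (pi * (y j - y k))"
      using trneg[of "pi * (y j - y k)"] by (simp add: algebra_simps)
    have "\<phi> j k = (y j - y k) ^ m / (y j * (y j - y k) * Pj * (y k * (y k - y j) * Pk)) * (- \<sigma> * trig (pi * (y j - y k)))"
      unfolding \<phi>_def pj pk tk[symmetric] using j jk by (simp add: Y_def)
    also have "y j * (y j - y k) * Pj * (y k * (y k - y j) * Pk) = - ((y j - y k)\<^sup>2 * (y j * y k * (Pj * Pk)))"
      by (simp add: power2_eq_square algebra_simps)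
    also have "(y j - y k) ^ m / (- ((y j - y k)\<^sup>2 * (y j * y k * (Pj * Pk)))) * (- \<sigma> * trig (pi * (y j - y k)))
        = \<sigma> * ((y j - y k) ^ m / (y j - y k)\<^sup>2 * trig (pi * (y j - y k)) / (y j * y k * (Pj * Pk)))"
      by (simp add: divide_inverse mult_ac)
    finally show "\<phi> j k = \<sigma> * ((y j - y k) powi (int m - 2) * trig (pi * (y j - y k)) /
              (y j * y k * (\<Prod>i\<in>{1..m}-{j,k}. (y j - y i) * (y k - y i))))"
      unfolding PP powi_m2[OF d] .
  qed
  finally show ?thesis unfolding \<phi>_def by (simp add: add.commute)
qed



definition Rg :: "nat \<Rightarrow> real \<Rightarrow> real \<Rightarrow> (nat\<Rightarrow>real) set" where
  "Rg m a b = {x. (\<Sum>i=1..m. \<bar>x i\<bar>) + \<bar>a - b + (\<Sum>i=1..m. x i)\<bar> \<le> a + b}"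

lemma psf: "product_sigma_finite (\<lambda>_::nat. lborel)"
  by (simp add: product_sigma_finite_def lborel.sigma_finite_measure_axioms)

lemma Rg_meas: "(indicator (Rg m a b) :: _ \<Rightarrow> real) \<in> borel_measurable (PiM {1..m} (\<lambda>_. lborel))"
proof -
  have "(\<lambda>x. \<Sum>i=1..m. (x i::real)) \<in> borel_measurable (PiM {1..m} (\<lambda>_. lborel))" by measurable
  then show ?thesis unfolding Rg_def indicator_def by measurable
qed

lemma Rg_bound: "x \<in> Rg m a b \<Longrightarrow> i \<in> {1..m} \<Longrightarrow> \<bar>x i\<bar> \<le> a + b"
proof -
  assume x: "x \<in> Rg m a b" and i: "i \<in> {1..m}"
  have "\<bar>x i\<bar> \<le> (\<Sum>i=1..m. \<bar>x i\<bar>)" using i by (intro member_le_sum) auto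
  with x show ?thesis unfolding Rg_def by auto
qed

lemma fh_integrable:
  fixes S :: "(nat \<Rightarrow> real) set" and I :: "nat set"
  assumes I: "finite I" and Sm: "(indicator S :: _ \<Rightarrow> real) \<in> borel_measurable (PiM I (\<lambda>_. lborel))"
    and Sb: "\<And>x i. x \<in> S \<Longrightarrow> i \<in> I \<Longrightarrow> \<bar>x i\<bar> \<le> c"
  shows "integrable (PiM I (\<lambda>_. lborel))
     (\<lambda>x. complex_of_real (indicator S x) * exp (- (2 * of_real pi * \<i> * complex_of_real (\<Sum>i\<in>I. x i * y i))))"
proof (rule Bochner_Integration.integrable_bound)
  let ?B = "PiE I (\<lambda>_. {-c..c})"
  interpret product_sigma_finite "\<lambda>_::nat. lborel" by (rule psf)
  have Bs: "?B \<in> sets (PiM I (\<lambda>_. lborel))"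
    using I by (intro sets_PiM_I_finite) auto
  have "emeasure (PiM I (\<lambda>_. lborel)) ?B = (\<Prod>i\<in>I. emeasure lborel {-c..c})"
    using I by (intro emeasure_PiM) auto
  also have "\<dots> < \<infinity>" by (simp add: less_top[symmetric] ennreal_prod_eq_top power_eq_top_ennreal emeasure_lborel_Icc_eq)
  finally show "integrable (PiM I (\<lambda>_. lborel)) (indicator ?B :: _ \<Rightarrow> real)"
    using Bs by (intro integrable_real_indicator) auto
  show "(\<lambda>x. complex_of_real (indicator S x) * exp (- (2 * of_real pi * \<i> * complex_of_real (\<Sum>i\<in>I. x i * y i))))
      \<in> borel_measurable (PiM I (\<lambda>_. lborel))"
    using Sm by measurable
  show "AE x in PiM I (\<lambda>_. lborel). norm (complex_of_real (indicator S x) * exp (- (2 * of_real pi * \<i> * complex_of_real (\<Sum>i\<in>I. x i * y i))))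
      \<le> norm (indicator ?B x :: real)"
  proof (rule AE_I2)
    fix x :: "nat \<Rightarrow> real" assume x: "x \<in> space (PiM I (\<lambda>_. lborel))"
    show "norm (complex_of_real (indicator S x) * exp (- (2 * of_real pi * \<i> * complex_of_real (\<Sum>i\<in>I. x i * y i))))
      \<le> norm (indicator ?B x :: real)"
    proof (cases "x \<in> S")
      case True
      have "\<And>i. i \<in> I \<Longrightarrow> x i \<in> {-c..c}" using Sb[OF True] by (force simp: abs_le_iff)
      then have "x \<in> ?B" using x by (auto simp: space_PiM PiE_def Pi_def)
      then show ?thesis using True by (simp add: norm_mult norm_exp_eq_Re)
    qed simp
  qed
qed

lemma sum_merge:
  fixes x z :: "nat \<Rightarrow> real" and g :: "real \<Rightarrow> real"
  shows "(\<Sum>i=1..Suc m. g (merge {Suc m} {1..m} (x, z) i)) = (\<Sum>i=1..m. g (z i)) + g (x (Suc m))"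
proof -
  have "(\<Sum>i=1..Suc m. g (merge {Suc m} {1..m} (x, z) i)) = (\<Sum>i=1..m. g (merge {Suc m} {1..m} (x, z) i)) + g (x (Suc m))"
    by (simp add: merge_def)
  also have "(\<Sum>i=1..m. g (merge {Suc m} {1..m} (x, z) i)) = (\<Sum>i=1..m. g (z i))"
    by (intro sum.cong) (auto simp: merge_def)
  finally show ?thesis .
qed

lemma sum_merge2:
  fixes x z :: "nat \<Rightarrow> real"
  shows "(\<Sum>i=1..Suc m. merge {Suc m} {1..m} (x, z) i * y i) = (\<Sum>i=1..m. z i * y i) + x (Suc m) * y (Suc m)"
proof -
  have "(\<Sum>i=1..Suc m. merge {Suc m} {1..m} (x, z) i * y i) = (\<Sum>i=1..m. merge {Suc m} {1..m} (x, z) i * y i) + x (Suc m) * y (Suc m)"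
    by (simp add: merge_def)
  also have "(\<Sum>i=1..m. merge {Suc m} {1..m} (x, z) i * y i) = (\<Sum>i=1..m. z i * y i)"
    by (intro sum.cong) (auto simp: merge_def)
  finally show ?thesis .
qed

lemma Rg_merge:
  "indicator (Rg (Suc m) a b) (merge {Suc m} {1..m} (x, z)) =
   (indicator (Rg m (a - max 0 (- x (Suc m))) (b - max 0 (x (Suc m)))) z :: real)"
proof -
  have 1: "(\<Sum>i=1..Suc m. \<bar>merge {Suc m} {1..m} (x, z) i\<bar>) = (\<Sum>i=1..m. \<bar>z i\<bar>) + \<bar>x (Suc m)\<bar>"
    using sum_merge[of abs] by simp
  have 2: "(\<Sum>i=1..Suc m. merge {Suc m} {1..m} (x, z) i) = (\<Sum>i=1..m. z i) + x (Suc m)"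
    using sum_merge[of "\<lambda>t. t"] by simp
  show ?thesis unfolding indicator_def Rg_def mem_Collect_eq 1 2
    by (cases "x (Suc m) \<ge> 0") (auto simp: max_def)
qed

lemma fh_rec:
  fixes y :: "nat \<Rightarrow> real" and a b :: real
  assumes Gm: "(\<lambda>t::real. fourier_hat m (indicator (Rg m (a - max 0 (-t)) (b - max 0 t))) y *
       exp (- (2 * of_real pi * \<i> * complex_of_real (t * y (Suc m))))) \<in> borel_measurable lborel"
  shows "fourier_hat (Suc m) (indicator (Rg (Suc m) a b)) y =
    (LINT t|lborel. fourier_hat m (indicator (Rg m (a - max 0 (-t)) (b - max 0 t))) y *
       exp (- (2 * of_real pi * \<i> * complex_of_real (t * y (Suc m)))))"
proof -
  interpret product_sigma_finite "\<lambda>_::nat. lborel" by (rule psf)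
  define G where "G = (\<lambda>t::real. fourier_hat m (indicator (Rg m (a - max 0 (-t)) (b - max 0 t))) y *
       exp (- (2 * of_real pi * \<i> * complex_of_real (t * y (Suc m)))))"
  let ?ph = "\<lambda>k (x::nat\<Rightarrow>real). exp (- (2 * of_real pi * \<i> * complex_of_real (\<Sum>i=1..k. x i * y i)))"
  let ?f = "\<lambda>x. complex_of_real (indicator (Rg (Suc m) a b) x) * ?ph (Suc m) x"
  have eq: "{1..Suc m} = {Suc m} \<union> {1..m}" by auto
  have int: "integrable (PiM {1..Suc m} (\<lambda>_. lborel)) ?f"
    by (rule fh_integrable[where c="a+b", OF _ Rg_meas]) (auto intro: Rg_bound)
  have "fourier_hat (Suc m) (indicator (Rg (Suc m) a b)) y = integral\<^sup>L (PiM ({Suc m} \<union> {1..m}) (\<lambda>_. lborel)) ?f"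
    unfolding fourier_hat_def eq[symmetric] ..
  also have "\<dots> = (\<integral>x. (\<integral>z. ?f (merge {Suc m} {1..m} (x, z)) \<partial>PiM {1..m} (\<lambda>_. lborel)) \<partial>PiM {Suc m} (\<lambda>_. lborel))"
    using int unfolding eq by (intro product_integral_fold) auto
  also have "\<dots> = (\<integral>x. G (x (Suc m)) \<partial>PiM {Suc m} (\<lambda>_. lborel))"
  proof (rule Bochner_Integration.integral_cong[OF refl])
    fix x :: "nat \<Rightarrow> real" assume "x \<in> space (PiM {Suc m} (\<lambda>_::nat. lborel))"
    have "(\<integral>z. ?f (merge {Suc m} {1..m} (x, z)) \<partial>PiM {1..m} (\<lambda>_. lborel)) =
      (\<integral>z. complex_of_real (indicator (Rg m (a - max 0 (- x (Suc m))) (b - max 0 (x (Suc m)))) z) * ?ph m z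
          * exp (- (2 * of_real pi * \<i> * complex_of_real (x (Suc m) * y (Suc m)))) \<partial>PiM {1..m} (\<lambda>_. lborel))"
    proof (rule Bochner_Integration.integral_cong[OF refl])
      fix z :: "nat \<Rightarrow> real" assume "z \<in> space (PiM {1..m} (\<lambda>_::nat. lborel))"
      show "?f (merge {Suc m} {1..m} (x, z)) =
        complex_of_real (indicator (Rg m (a - max 0 (- x (Suc m))) (b - max 0 (x (Suc m)))) z) * ?ph m z
          * exp (- (2 * of_real pi * \<i> * complex_of_real (x (Suc m) * y (Suc m))))"
        unfolding Rg_merge sum_merge2 by (simp add: algebra_simps exp_add[symmetric])
    qed
    also have "\<dots> = G (x (Suc m))"
      unfolding G_def fourier_hat_def by (rule integral_mult_left_zero)
    finally show "(\<integral>z. ?f (merge {Suc m} {1..m} (x, z)) \<partial>PiM {1..m} (\<lambda>_. lborel)) = G (x (Suc m))" .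
  qed
  also have "\<dots> = integral\<^sup>L lborel G"
    using Gm unfolding G_def by (intro product_integral_singleton) auto
  finally show ?thesis unfolding G_def .
qed

lemma Rg_empty: "a < 0 \<or> b < 0 \<Longrightarrow> Rg m a b = {}"
proof (rule ccontr)
  assume ab: "a < 0 \<or> b < 0" and "Rg m a b \<noteq> {}"
  then obtain x where x: "x \<in> Rg m a b" by auto
  have "\<bar>\<Sum>i=1..m. x i\<bar> \<le> (\<Sum>i=1..m. \<bar>x i\<bar>)" by (rule sum_abs)
  moreover have "\<bar>a - b\<bar> \<le> \<bar>\<Sum>i=1..m. x i\<bar> + \<bar>a - b + (\<Sum>i=1..m. x i)\<bar>" by linarith
  moreover have "(\<Sum>i=1..m. \<bar>x i\<bar>) + \<bar>a - b + (\<Sum>i=1..m. x i)\<bar> \<le> a + b"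
    using x unfolding Rg_def mem_Collect_eq .
  ultimately show False using ab by linarith
qed

lemma fh_empty: "a < 0 \<or> b < 0 \<Longrightarrow> fourier_hat m (indicator (Rg m a b)) y = 0"
  by (simp add: Rg_empty fourier_hat_def)

lemma fh_zero: "a \<ge> 0 \<Longrightarrow> b \<ge> 0 \<Longrightarrow> fourier_hat 0 (indicator (Rg 0 a b)) y = 1"
  by (simp add: fourier_hat_def PiM_empty Rg_def)

lemma lint_expsum:
  fixes \<alpha> z :: "nat \<Rightarrow> nat \<Rightarrow> complex"
  assumes cd: "c \<le> d" and A: "finite A" and z: "\<And>j k. j \<in> A \<Longrightarrow> k \<in> A \<Longrightarrow> z j k \<noteq> 0"
  shows "set_integrable lborel {c..d} (\<lambda>t. \<Sum>j\<in>A. \<Sum>k\<in>A. \<alpha> j k * exp (z j k * of_real t))"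
    "(LINT t|lborel. indicator {c..d} t *\<^sub>R (\<Sum>j\<in>A. \<Sum>k\<in>A. \<alpha> j k * exp (z j k * of_real t))) =
     (\<Sum>j\<in>A. \<Sum>k\<in>A. \<alpha> j k * (exp (z j k * of_real d) - exp (z j k * of_real c)) / z j k)"
proof -
  have cont: "continuous_on {c..d} (\<lambda>t. \<Sum>j\<in>A. \<Sum>k\<in>A. \<alpha> j k * exp (z j k * of_real t))"
    by (intro continuous_intros)
  then show "set_integrable lborel {c..d} (\<lambda>t. \<Sum>j\<in>A. \<Sum>k\<in>A. \<alpha> j k * exp (z j k * of_real t))"
    by (rule borel_integrable_atLeastAtMost')
  define F where "F = (\<lambda>u::complex. \<Sum>j\<in>A. \<Sum>k\<in>A. \<alpha> j k / z j k * exp (z j k * u))"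
  have dF: "(F has_field_derivative (\<Sum>j\<in>A. \<Sum>k\<in>A. \<alpha> j k * exp (z j k * u))) (at u)" for u
  proof -
    have "(F has_field_derivative (\<Sum>j\<in>A. \<Sum>k\<in>A. \<alpha> j k / z j k * (exp (z j k * u) * z j k))) (at u)"
      unfolding F_def
      apply (rule derivative_eq_intros refl)+
      apply (intro sum.cong refl)
      apply (simp only: mult_zero_left add_0_left mult_1_left mult_ac)
      done
    also have "(\<Sum>j\<in>A. \<Sum>k\<in>A. \<alpha> j k / z j k * (exp (z j k * u) * z j k)) = (\<Sum>j\<in>A. \<Sum>k\<in>A. \<alpha> j k * exp (z j k * u))"
    proof (intro sum.cong refl)
      fix j k assume "j \<in> A" "k \<in> A"
      then have "z j k \<noteq> 0" by (rule z)
      then show "\<alpha> j k / z j k * (exp (z j k * u) * z j k) = \<alpha> j k * exp (z j k * u)" by simp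
    qed
    finally show ?thesis .
  qed
  have "(LINT t|lborel. indicator {c..d} t *\<^sub>R (\<Sum>j\<in>A. \<Sum>k\<in>A. \<alpha> j k * exp (z j k * of_real t))) =
     F (of_real d) - F (of_real c)"
    using cd cont by (intro integral_FTC_atLeastAtMost[where F="\<lambda>t. F (of_real t)"])
      (auto intro!: has_vector_derivative_real_field dF)
  also have "\<dots> = (\<Sum>j\<in>A. \<Sum>k\<in>A. \<alpha> j k * (exp (z j k * of_real d) - exp (z j k * of_real c)) / z j k)"
    unfolding F_def by (simp add: sum_subtractf[symmetric] diff_divide_distrib right_diff_distrib)
  finally show "(LINT t|lborel. indicator {c..d} t *\<^sub>R (\<Sum>j\<in>A. \<Sum>k\<in>A. \<alpha> j k * exp (z j k * of_real t))) =
     (\<Sum>j\<in>A. \<Sum>k\<in>A. \<alpha> j k * (exp (z j k * of_real d) - exp (z j k * of_real c)) / z j k)" .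
qed

lemma fh_step:
  fixes C :: "nat \<Rightarrow> nat \<Rightarrow> complex" and W :: "nat \<Rightarrow> complex" and A :: "nat set"
    and y :: "nat \<Rightarrow> real" and a b :: real and w :: complex
  assumes A: "finite A"
    and IH: "\<And>a b. a \<ge> 0 \<Longrightarrow> b \<ge> 0 \<Longrightarrow> fourier_hat m (indicator (Rg m a b)) y =
          (\<Sum>j\<in>A. \<Sum>k\<in>A. C j k * exp (W k * of_real a - W j * of_real b))"
    and w: "w = 2 * of_real pi * \<i> * of_real (y (Suc m))"
    and ne: "\<And>j. j \<in> A \<Longrightarrow> W j \<noteq> w"
    and a: "a \<ge> 0" and b: "b \<ge> 0"
  shows "fourier_hat (Suc m) (indicator (Rg (Suc m) a b)) y =
    (\<Sum>j\<in>A. \<Sum>k\<in>A. C j k * ((exp (W k * of_real a - w * of_real b) - exp (W k * of_real a - W j * of_real b)) / (W j - w)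
       + (exp (W k * of_real a - W j * of_real b) - exp (w * of_real a - W j * of_real b)) / (W k - w)))"
proof -
  define K where "K = (\<lambda>a b::real. \<Sum>j\<in>A. \<Sum>k\<in>A. C j k * exp (W k * of_real a - W j * of_real b))"
  define e where "e = (\<lambda>t::real. exp (- (w * of_real t)))"
  define \<alpha> where "\<alpha> = (\<lambda>j k. C j k * exp (W k * of_real a - W j * of_real b))"
  have e_eq: "exp (- (2 * of_real pi * \<i> * complex_of_real (t * y (Suc m)))) = e t" for t
    unfolding e_def w by (simp add: mult_ac)
  define G where "G = (\<lambda>t::real. fourier_hat m (indicator (Rg m (a - max 0 (-t)) (b - max 0 t))) y * e t)"
  define g1 where "g1 = (\<lambda>t::real. \<Sum>j\<in>A. \<Sum>k\<in>A. \<alpha> j k * exp ((W j - w) * of_real t))"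
  define g2 where "g2 = (\<lambda>t::real. \<Sum>j\<in>A. \<Sum>k\<in>A. \<alpha> j k * exp ((W k - w) * of_real t))"
  have g1_eq: "K a (b - t) * e t = g1 t" for t
    unfolding K_def g1_def e_def \<alpha>_def sum_distrib_right
    by (intro sum.cong refl) (simp add: mult.assoc exp_add[symmetric] algebra_simps)
  have g2_eq: "K (a + t) b * e t = g2 t" for t
    unfolding K_def g2_def e_def \<alpha>_def sum_distrib_right
    by (intro sum.cong refl) (simp add: mult.assoc exp_add[symmetric] algebra_simps)
  have Geq: "G t = indicator {0..b} t *\<^sub>R g1 t + indicator {-a..0} t *\<^sub>R g2 t - indicator {0..0} t *\<^sub>R K a b" for t
  proof -
    consider "t = 0" | "0 < t" "t \<le> b" | "b < t" | "-a \<le> t" "t < 0" | "t < -a" by linarith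
    then show ?thesis
    proof cases
      case 1
      then show ?thesis using a b g1_eq[of 0] g2_eq[of 0] unfolding G_def by (simp add: IH K_def e_def)
    next
      case 2
      then show ?thesis using a b g1_eq[of t] unfolding G_def by (simp add: IH K_def)
    next
      case 3
      then show ?thesis using a b unfolding G_def by (simp add: fh_empty)
    next
      case 4
      then show ?thesis using a b g2_eq[of t] unfolding G_def by (simp add: IH K_def)
    next
      case 5
      then show ?thesis using a b unfolding G_def by (simp add: fh_empty)
    qed
  qed
  have z1: "\<And>j k. j \<in> A \<Longrightarrow> k \<in> A \<Longrightarrow> W j - w \<noteq> 0" using ne by auto
  have z2: "\<And>j k. j \<in> A \<Longrightarrow> k \<in> A \<Longrightarrow> W k - w \<noteq> 0" using ne by auto
  have i1: "integrable lborel (\<lambda>t. indicator {0..b} t *\<^sub>R g1 t)"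
    using lint_expsum(1)[OF b A z1, where \<alpha>=\<alpha>] unfolding g1_def set_integrable_def by simp
  have i2: "integrable lborel (\<lambda>t. indicator {-a..0} t *\<^sub>R g2 t)"
    using lint_expsum(1)[of "-a" 0, OF _ A z2, where \<alpha>=\<alpha>] a unfolding g2_def set_integrable_def by simp
  have i3: "integrable lborel (\<lambda>t::real. indicator {0..0} t *\<^sub>R K a b)"
    by (intro integrable_scaleR_left integrable_real_indicator) (auto simp: emeasure_lborel_Icc_eq)
  have I1: "(LINT t|lborel. indicator {0..b} t *\<^sub>R g1 t) =
      (\<Sum>j\<in>A. \<Sum>k\<in>A. \<alpha> j k * (exp ((W j - w) * of_real b) - exp ((W j - w) * of_real 0)) / (W j - w))"
    unfolding g1_def by (rule lint_expsum(2)[OF b A z1])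
  have I2: "(LINT t|lborel. indicator {-a..0} t *\<^sub>R g2 t) =
      (\<Sum>j\<in>A. \<Sum>k\<in>A. \<alpha> j k * (exp ((W k - w) * of_real 0) - exp ((W k - w) * of_real (-a))) / (W k - w))"
    unfolding g2_def using a by (intro lint_expsum(2)[OF _ A z2]) auto
  have I3: "(LINT t::real|lborel. indicator {0..0} t *\<^sub>R K a b) = 0"
    by simp
  have "fourier_hat (Suc m) (indicator (Rg (Suc m) a b)) y = integral\<^sup>L lborel G"
  proof -
    have "G = (\<lambda>t. indicator {0..b} t *\<^sub>R g1 t + indicator {-a..0} t *\<^sub>R g2 t - indicator {0..0} t *\<^sub>R K a b)"
      using Geq by auto
    then have "G \<in> borel_measurable lborel" using i1 i2 i3 by auto
    then show ?thesis unfolding G_def e_eq[symmetric] by (rule fh_rec)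
  qed
  also have "\<dots> = (LINT t|lborel. indicator {0..b} t *\<^sub>R g1 t) + (LINT t|lborel. indicator {-a..0} t *\<^sub>R g2 t)
      - (LINT t::real|lborel. indicator {0..0} t *\<^sub>R K a b)"
    unfolding Geq using i1 i2 i3 by simp
  also have "\<dots> = (\<Sum>j\<in>A. \<Sum>k\<in>A. \<alpha> j k * (exp ((W j - w) * of_real b) - exp ((W j - w) * of_real 0)) / (W j - w)
      + \<alpha> j k * (exp ((W k - w) * of_real 0) - exp ((W k - w) * of_real (-a))) / (W k - w))"
    unfolding I1 I2 I3 by (simp add: sum.distrib)
  also have "\<dots> = (\<Sum>j\<in>A. \<Sum>k\<in>A. C j k * ((exp (W k * of_real a - w * of_real b) - exp (W k * of_real a - W j * of_real b)) / (W j - w)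
       + (exp (W k * of_real a - W j * of_real b) - exp (w * of_real a - W j * of_real b)) / (W k - w)))"
  proof (intro sum.cong refl)
    fix j k
    have 1: "exp (W k * of_real a - W j * of_real b) * exp ((W j - w) * of_real b) = exp (W k * of_real a - w * of_real b)"
      by (simp add: exp_add[symmetric] algebra_simps)
    have 2: "exp (W k * of_real a - W j * of_real b) * exp (- ((W k - w) * of_real a)) = exp (w * of_real a - W j * of_real b)"
      by (simp add: exp_add[symmetric] algebra_simps)
    show "\<alpha> j k * (exp ((W j - w) * of_real b) - exp ((W j - w) * of_real 0)) / (W j - w)
      + \<alpha> j k * (exp ((W k - w) * of_real 0) - exp ((W k - w) * of_real (-a))) / (W k - w) =
      C j k * ((exp (W k * of_real a - w * of_real b) - exp (W k * of_real a - W j * of_real b)) / (W j - w)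
       + (exp (W k * of_real a - W j * of_real b) - exp (w * of_real a - W j * of_real b)) / (W k - w))"
      unfolding \<alpha>_def
      by (simp add: right_diff_distrib diff_divide_distrib add_divide_distrib distrib_left mult.assoc 1 2)
  qed
  finally show ?thesis .
qed


lemma fh_CF:
  fixes y :: "nat \<Rightarrow> real" and W :: "nat \<Rightarrow> complex"
  assumes Wdef: "W = (\<lambda>i. 2 * of_real pi * \<i> * complex_of_real (if i = 0 then 0 else y i))"
  assumes inj: "inj_on W {0..m}"
  shows "a \<ge> 0 \<Longrightarrow> b \<ge> 0 \<Longrightarrow> fourier_hat m (indicator (Rg m a b)) y = CF m W a b"
  using inj
proof (induction m arbitrary: a b)
  case 0
  then show ?case by (simp add: fh_zero CF_def P_def Wdef)
next
  case (Suc m)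
  have injm: "inj_on W {0..m}" using Suc.prems(3) by (rule inj_on_subset) auto
  have IH: "fourier_hat m (indicator (Rg m a b)) y =
      (\<Sum>j\<in>{0..m}. \<Sum>k\<in>{0..m}. (W j - W k) ^ m / (P {0..m} W j * P {0..m} W k) * exp (W k * of_real a - W j * of_real b))"
    if "a \<ge> 0" "b \<ge> 0" for a b
    using Suc.IH[OF that injm] unfolding CF_def .
  have ne: "W j \<noteq> W (Suc m)" if "j \<in> {0..m}" for j
  proof
    assume "W j = W (Suc m)"
    then have "j = Suc m" using inj_onD[OF Suc.prems(3)] that by auto
    then show False using that by auto
  qed
  have w: "W (Suc m) = 2 * of_real pi * \<i> * of_real (y (Suc m))" by (simp add: Wdef)
  show ?case
    unfolding CF_step[OF Suc.prems(3)]
    by (rule fh_step[OF _ IH w ne Suc.prems(1,2)]) auto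
qed

theorem mainTheorem10:
  fixes n :: nat and y :: "nat \<Rightarrow> real"
  assumes "n \<ge> 2"
    and "\<forall>j\<in>{1..n-1}. y j \<noteq> 0"
    and "\<forall>j\<in>{1..n-1}. \<forall>k\<in>{1..n-1}. j \<noteq> k \<longrightarrow> y j \<noteq> y k"
  shows "fourier_hat (n-1) (indicator (H_set (n-1))) y =
    complex_of_real
     (if odd n then
        (-1) ^ ((n-1) div 2) / (2 ^ (n-2) * pi ^ (n-1)) *
        ( - (\<Sum>j=1..n-1. \<Sum>k=j+1..n-1.
               (y j - y k) powi (int n - 3) * cos (pi * (y j - y k)) /
               (y j * y k * (\<Prod>i\<in>{1..n-1} - {j,k}. (y j - y i) * (y k - y i))))
          + (\<Sum>j=1..n-1. (y j) powi (int n - 3) * cos (pi * y j) /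
               (\<Prod>i\<in>{1..n-1} - {j}. (y j - y i) * y i)))
      else
        (-1) ^ (n div 2 - 1) / (2 ^ (n-2) * pi ^ (n-1)) *
        ( (\<Sum>j=1..n-1. \<Sum>k=j+1..n-1.
               (y j - y k) powi (int n - 3) * sin (pi * (y j - y k)) /
               (y j * y k * (\<Prod>i\<in>{1..n-1} - {j,k}. (y j - y i) * (y k - y i))))
          + (\<Sum>j=1..n-1. (y j) powi (int n - 3) * sin (pi * y j) /
               (\<Prod>i\<in>{1..n-1} - {j}. (y j - y i) * y i))))"
  
proof -
  obtain m where n: "n = Suc m" and m: "m \<ge> 1" using assms(1) by (metis Suc_le_D Suc_le_mono one_add_one plus_1_eq_Suc)
  have nz: "\<And>j. j \<in> {1..m} \<Longrightarrow> y j \<noteq> 0" using assms(2) n by auto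
  have dist: "\<And>j k. j \<in> {1..m} \<Longrightarrow> k \<in> {1..m} \<Longrightarrow> j \<noteq> k \<Longrightarrow> y j \<noteq> y k" using assms(3) n by auto
  define Y where "Y = (\<lambda>i. if i = 0 then 0 else y i)"
  define p where "p = (\<lambda>j. \<Prod>i\<in>{0..m}-{j}. (Y j - Y i))"
  define W where "W = (\<lambda>i. 2 * of_real pi * \<i> * complex_of_real (Y i))"
  have inj: "inj_on W {0..m}"
  proof (rule inj_onI)
    fix i j assume i: "i \<in> {0..m}" and j: "j \<in> {0..m}" and e: "W i = W j"
    then have "Y i = Y j" unfolding W_def by simp
    show "i = j"
    proof (rule ccontr)
      assume ij: "i \<noteq> j"
      show False
      proof (cases "i = 0 \<or> j = 0")
        case True
        then show False using \<open>Y i = Y j\<close> ij i j nz unfolding Y_def by (auto split: if_splits)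
      next
        case False
        then have "i \<in> {1..m}" "j \<in> {1..m}" using i j by auto
        then have "y i \<noteq> y j" using dist ij by blast
        then show False using \<open>Y i = Y j\<close> False unfolding Y_def by auto
      qed
    qed
  qed
  have H: "H_set m = Rg m (1/2) (1/2)" unfolding H_set_def Rg_def by simp
  define S1 where "S1 = (\<lambda>trig. \<Sum>j=1..m. \<Sum>k=Suc j..m. (y j - y k) powi (int m - 2) * trig (pi * (y j - y k)) /
              (y j * y k * (\<Prod>i\<in>{1..m}-{j,k}. (y j - y i) * (y k - y i))))"
  define S2 where "S2 = (\<lambda>trig. \<Sum>j=1..m. y j powi (int m - 2) * trig (pi * y j) / (\<Prod>i\<in>{1..m}-{j}. (y j - y i) * y i))"
  have key: "fourier_hat m (indicator (H_set m)) y = of_real ((-1) ^ (m div 2) / (2 * pi) ^ m *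
      (2 * (\<sigma> * S1 trig + S2 trig)))"
    if tr: "(even m \<and> trig = cos \<and> \<sigma> = -1) \<or> (odd m \<and> trig = sin \<and> \<sigma> = 1)" for trig \<sigma>
  proof -
    have "fourier_hat m (indicator (H_set m)) y = CF m W (1/2) (1/2)"
      unfolding H by (rule fh_CF[OF _ inj]) (auto simp: W_def Y_def)
    also have "\<dots> = of_real ((-1) ^ (m div 2) / (2 * pi) ^ m *
      (\<Sum>j=0..m. \<Sum>k=0..m. (Y j - Y k) ^ m / (p j * p k) * trig (pi * (Y k - Y j))))"
      unfolding W_def Y_def p_def by (rule complex_part) (use tr in auto)
    also have "(\<Sum>j=0..m. \<Sum>k=0..m. (Y j - Y k) ^ m / (p j * p k) * trig (pi * (Y k - Y j))) =
        2 * (\<sigma> * S1 trig + S2 trig)"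
      unfolding S1_def S2_def Y_def p_def by (rule real_part[OF m nz dist tr])
    finally show ?thesis .
  qed
  have c2: "(2::real) / (2 * pi) ^ m = 1 / (2 ^ (m - 1) * pi ^ m)"
    using m by (cases m) (auto simp: power_mult_distrib)
  have nm: "n - 1 = m" "n - 2 = m - 1" "int n - 3 = int m - 2" using n by auto
  have sums: "(\<Sum>j=1..m. \<Sum>k=j+1..m. f j k) = (\<Sum>j=1..m. \<Sum>k=Suc j..m. f j k)" for f :: "nat \<Rightarrow> nat \<Rightarrow> real"
    by simp
  show ?thesis
  proof (cases "even m")
    case True
    have on: "odd n" using True n by simp
    have "fourier_hat m (indicator (H_set m)) y = of_real ((-1) ^ (m div 2) / (2 * pi) ^ m * (2 * (- S1 cos + S2 cos)))"
      using key[of cos "-1"] True by simp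
    also have "(-1) ^ (m div 2) / (2 * pi) ^ m * (2 * (- S1 cos + S2 cos)) =
        (-1) ^ (m div 2) / (2 ^ (m - 1) * pi ^ m) * (- S1 cos + S2 cos)"
      using c2 by (simp add: field_simps)
    finally have F: "fourier_hat m (indicator (H_set m)) y = of_real ((-1) ^ (m div 2) / (2 ^ (m - 1) * pi ^ m) * (- S1 cos + S2 cos))" .
    have q: "(n - 1) div 2 = m div 2" using n by simp
    show ?thesis unfolding q nm if_P[OF on] Suc_eq_plus1[symmetric]
      using F unfolding S1_def S2_def nm(1) .
  next
    case False
    have en: "\<not> odd n" using False n by simp
    have q: "n div 2 - 1 = m div 2" using False n by (metis Suc_1 Suc_eq_plus1 diff_Suc_1 div2_Suc_Suc odd_Suc_div_two even_Suc)
    have "fourier_hat m (indicator (H_set m)) y = of_real ((-1) ^ (m div 2) / (2 * pi) ^ m * (2 * (S1 sin + S2 sin)))"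
      using key[of sin 1] False by simp
    also have "(-1) ^ (m div 2) / (2 * pi) ^ m * (2 * (S1 sin + S2 sin)) =
        (-1) ^ (m div 2) / (2 ^ (m - 1) * pi ^ m) * (S1 sin + S2 sin)"
      using c2 by (simp add: field_simps)
    finally have F: "fourier_hat m (indicator (H_set m)) y = of_real ((-1) ^ (m div 2) / (2 ^ (m - 1) * pi ^ m) * (S1 sin + S2 sin))" .
    show ?thesis unfolding q nm if_not_P[OF en] Suc_eq_plus1[symmetric]
      using F unfolding S1_def S2_def nm(1) .
  qed
qed

end
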